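(* Let $n\ge2$ and let $M'\subset\mathbb{C}^{n+1}$ be a real-analytic or smooth real hypersurface through $0$ defined near $0$ by $$\rho(W,\bar W)=-\mathrm{Im}\,w_{n+1}+\sum_{j=1}^{n-1}|w_j|^2+\phi(W,\bar W),\qquad \phi=O(|W|^3),$$ $W=(w_1,\dots,w_{n+1})$. For $1\le k\le n$ let $$\Lambda_k=2i\Big(\frac{\partial\rho}{\partial\bar w_{n+1}}\frac{\partial}{\partial\bar w_k}-\frac{\partial\rho}{\partial\bar w_k}\frac{\partial}{\partial\bar w_{n+1}}\Big),$$ let $\rho_W=(\partial\rho/\partial w_1,\dots,\partial\rho/\partial w_{n+1})$, and for $1\le i_1\le\dots\le i_l\le n$ let $\Delta_{i_1\dots i_l}(q)$ be the determinant of the $(n+1)\times(n+1)$ matrix whose rows are $\rho_W,\Lambda_1\rho_W,\dots,\Lambda_{n-1}\rho_W,\Lambda_{i_1}\cdots\Lambda_{i_l}\rho_W$, evaluated at $q\in M'$. Assume $M'$ is $l$-nondegenerate at $0$ for some $l\ge2$. Then there exist $1\le i_1\le\dots\le i_l\le n$ such that $\Delta_{i_1\dots i_l}(0)\ne0$.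
   Context: The $\Lambda_k$, $1\le k\le n$, form a local basis of CR vector fields of $M'$. For $E_l(p)=\mathrm{Span}_{\mathbb{C}}\{\Lambda^\alpha\rho_W(p):0\le|\alpha|\le l\}$ with $\Lambda^\alpha=\Lambda_1^{\alpha_1}\cdots\Lambda_n^{\alpha_n}$, $M'$ is $k$-nondegenerate at $p$ if $E_{k-1}(p)\ne E_k(p)=\mathbb{C}^{n+1}$. *)

theory Defs
  imports Complex_Main "HOL-Analysis.Derivative" "Jordan_Normal_Form.Determinant"
begin

text \<open>Points of C^(n+1) are modelled as functions W :: nat => complex, where only the
coordinates 1..n+1 are used; the space C^(n+1) itself is the slice of functions vanishing
outside {1..n+1}.\<close>

definition cslice :: "nat \<Rightarrow> (nat \<Rightarrow> complex) set" where
  "cslice n = {W. \<forall>j. j \<notin> {1..n+1} \<longrightarrow> W j = 0}"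

definition cnorm :: "nat \<Rightarrow> (nat \<Rightarrow> complex) \<Rightarrow> real" where
  "cnorm n W = sqrt (\<Sum>j=1..n+1. (cmod (W j))^2)"

text \<open>Real directions: (j, False) is the direction of Re w_j, (j, True) of Im w_j.\<close>

definition dirs :: "nat \<Rightarrow> (nat \<times> bool) set" where
  "dirs n = {1..n+1} \<times> UNIV"

definition line :: "nat \<times> bool \<Rightarrow> (nat \<Rightarrow> complex) \<Rightarrow> real \<Rightarrow> (nat \<Rightarrow> complex)" where
  "line d W t = W(fst d := W (fst d) + (if snd d then \<i> else 1) * complex_of_real t)"

definition pdir :: "nat \<times> bool \<Rightarrow> ((nat \<Rightarrow> complex) \<Rightarrow> complex) \<Rightarrow> (nat \<Rightarrow> complex) \<Rightarrow> complex" where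
  "pdir d f W = vector_derivative (\<lambda>t::real. f (line d W t)) (at 0)"

fun pdirs :: "(nat \<times> bool) list \<Rightarrow> ((nat \<Rightarrow> complex) \<Rightarrow> complex) \<Rightarrow> (nat \<Rightarrow> complex) \<Rightarrow> complex" where
  "pdirs [] f = f"
| "pdirs (d # ds) f = pdir d (pdirs ds f)"

definition cont_slice :: "nat \<Rightarrow> ((nat \<Rightarrow> complex) \<Rightarrow> complex) \<Rightarrow> (nat \<Rightarrow> complex) \<Rightarrow> bool" where
  "cont_slice n g W \<longleftrightarrow> (\<forall>\<epsilon>>0. \<exists>\<eta>>0. \<forall>V\<in>cslice n.
      cnorm n (\<lambda>j. V j - W j) < \<eta> \<longrightarrow> cmod (g V - g W) < \<epsilon>)"

definition smooth_near0 :: "nat \<Rightarrow> ((nat \<Rightarrow> complex) \<Rightarrow> complex) \<Rightarrow> bool" where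
  "smooth_near0 n f \<longleftrightarrow> (\<exists>\<delta>>0. \<forall>ds. set ds \<subseteq> dirs n \<longrightarrow>
      (\<forall>W\<in>cslice n. cnorm n W < \<delta> \<longrightarrow>
         (\<forall>d\<in>dirs n. (\<lambda>t::real. pdirs ds f (line d W t)) differentiable (at 0))
         \<and> cont_slice n (pdirs ds f) W))"

definition dw :: "((nat \<Rightarrow> complex) \<Rightarrow> complex) \<Rightarrow> nat \<Rightarrow> (nat \<Rightarrow> complex) \<Rightarrow> complex" where
  "dw f j W = (pdir (j, False) f W - \<i> * pdir (j, True) f W) / 2"

definition dwb :: "((nat \<Rightarrow> complex) \<Rightarrow> complex) \<Rightarrow> nat \<Rightarrow> (nat \<Rightarrow> complex) \<Rightarrow> complex" where
  "dwb f j W = (pdir (j, False) f W + \<i> * pdir (j, True) f W) / 2"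

definition Lam :: "nat \<Rightarrow> ((nat \<Rightarrow> complex) \<Rightarrow> complex) \<Rightarrow> nat
     \<Rightarrow> ((nat \<Rightarrow> complex) \<Rightarrow> complex) \<Rightarrow> (nat \<Rightarrow> complex) \<Rightarrow> complex" where
  "Lam n r k g W = 2 * \<i> * (dwb r (n+1) W * dwb g k W - dwb r k W * dwb g (n+1) W)"

fun Lams :: "nat \<Rightarrow> ((nat \<Rightarrow> complex) \<Rightarrow> complex) \<Rightarrow> nat list
     \<Rightarrow> ((nat \<Rightarrow> complex) \<Rightarrow> complex) \<Rightarrow> (nat \<Rightarrow> complex) \<Rightarrow> complex" where
  "Lams n r [] g = g"
| "Lams n r (i # is) g = Lam n r i (Lams n r is g)"

definition LrhoW :: "nat \<Rightarrow> ((nat \<Rightarrow> complex) \<Rightarrow> complex) \<Rightarrow> nat list \<Rightarrow> (nat \<Rightarrow> complex) \<Rightarrow> (nat \<Rightarrow> complex)" where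
  "LrhoW n r is p = (\<lambda>m. if m \<in> {1..n+1} then Lams n r is (dw r m) p else 0)"

definition cspan :: "(nat \<Rightarrow> complex) set \<Rightarrow> (nat \<Rightarrow> complex) set" where
  "cspan S = {v. \<exists>F c. finite F \<and> F \<subseteq> S \<and> v = (\<lambda>j. \<Sum>u\<in>F. c u * u j)}"

text \<open>E_l(p): multi-indices alpha with |alpha| <= l correspond to sorted lists in {1..n}
of length <= l (Lambda^alpha = Lambda_1^alpha_1 ... Lambda_n^alpha_n).\<close>

definition Espace :: "nat \<Rightarrow> ((nat \<Rightarrow> complex) \<Rightarrow> complex) \<Rightarrow> nat \<Rightarrow> (nat \<Rightarrow> complex) \<Rightarrow> (nat \<Rightarrow> complex) set" where
  "Espace n r l p = cspan {LrhoW n r is p | is. sorted is \<and> set is \<subseteq> {1..n} \<and> length is \<le> l}"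

definition k_nondegenerate :: "nat \<Rightarrow> ((nat \<Rightarrow> complex) \<Rightarrow> complex) \<Rightarrow> nat \<Rightarrow> (nat \<Rightarrow> complex) \<Rightarrow> bool" where
  "k_nondegenerate n r k p \<longleftrightarrow> Espace n r (k - 1) p \<noteq> Espace n r k p \<and> Espace n r k p = cslice n"

definition Delta :: "nat \<Rightarrow> ((nat \<Rightarrow> complex) \<Rightarrow> complex) \<Rightarrow> nat list \<Rightarrow> (nat \<Rightarrow> complex) \<Rightarrow> complex" where
  "Delta n r is q = det (mat (n+1) (n+1) (\<lambda>(a, b).
      if a = 0 then LrhoW n r [] q (b+1)
      else if a < n then LrhoW n r [a] q (b+1)
      else LrhoW n r is q (b+1)))"

end

theory Submission
  imports Defs
begin

lemma cspan_base: "u \<in> S \<Longrightarrow> u \<in> cspan S"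
  unfolding cspan_def by (rule CollectI, rule exI[of _ "{u}"], rule exI[of _ "\<lambda>_. 1"]) auto

lemma cspan_zero: "(\<lambda>_. 0) \<in> cspan S"
  unfolding cspan_def by (rule CollectI, rule exI[of _ "{}"]) auto

lemma cspan_add:
  assumes "v \<in> cspan S" "w \<in> cspan S"
  shows "(\<lambda>j. v j + w j) \<in> cspan S"
proof -
  obtain F1 c1 where 1: "finite F1" "F1 \<subseteq> S" "v = (\<lambda>j. \<Sum>u\<in>F1. c1 u * u j)"
    using assms(1) unfolding cspan_def by blast
  obtain F2 c2 where 2: "finite F2" "F2 \<subseteq> S" "w = (\<lambda>j. \<Sum>u\<in>F2. c2 u * u j)"
    using assms(2) unfolding cspan_def by blast
  let ?c = "\<lambda>u. (if u \<in> F1 then c1 u else 0) + (if u \<in> F2 then c2 u else 0)"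
  have "(\<lambda>j. v j + w j) = (\<lambda>j. \<Sum>u\<in>F1 \<union> F2. ?c u * u j)"
  proof
    fix j
    have a: "(\<Sum>u\<in>F1 \<union> F2. (if u \<in> F1 then c1 u else 0) * u j) = (\<Sum>u\<in>F1. c1 u * u j)"
      by (rule sum.mono_neutral_cong_right) (use 1 2 in auto)
    have b: "(\<Sum>u\<in>F1 \<union> F2. (if u \<in> F2 then c2 u else 0) * u j) = (\<Sum>u\<in>F2. c2 u * u j)"
      by (rule sum.mono_neutral_cong_right) (use 1 2 in auto)
    show "v j + w j = (\<Sum>u\<in>F1 \<union> F2. ?c u * u j)"
      unfolding distrib_right sum.distrib a b using 1 2 by simp
  qed
  hence "finite (F1 \<union> F2) \<and> F1 \<union> F2 \<subseteq> S \<and> (\<lambda>j. v j + w j) = (\<lambda>j. \<Sum>u\<in>F1 \<union> F2. ?c u * u j)"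
    using 1 2 by simp
  thus ?thesis unfolding cspan_def by (intro CollectI exI[of _ "F1 \<union> F2"] exI[of _ ?c])
qed

lemma cspan_smult:
  assumes "v \<in> cspan S"
  shows "(\<lambda>j. a * v j) \<in> cspan S"
proof -
  obtain F c where 1: "finite F" "F \<subseteq> S" "v = (\<lambda>j. \<Sum>u\<in>F. c u * u j)"
    using assms unfolding cspan_def by blast
  have "(\<lambda>j. a * v j) = (\<lambda>j. \<Sum>u\<in>F. (a * c u) * u j)"
    using 1 by (auto simp: sum_distrib_left mult.assoc)
  hence "finite F \<and> F \<subseteq> S \<and> (\<lambda>j. a * v j) = (\<lambda>j. \<Sum>u\<in>F. (a * c u) * u j)"
    using 1 by simp
  thus ?thesis unfolding cspan_def by (intro CollectI exI[of _ F] exI[of _ "\<lambda>u. a * c u"])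
qed

lemma cspan_sum:
  assumes "finite I" "\<And>i. i \<in> I \<Longrightarrow> g i \<in> cspan S"
  shows "(\<lambda>j. \<Sum>i\<in>I. f i * g i j) \<in> cspan S"
  using assms
proof (induction I rule: finite_induct)
  case empty
  then show ?case using cspan_zero by simp
next
  case (insert x F)
  have "(\<lambda>j. f x * g x j + (\<Sum>i\<in>F. f i * g i j)) \<in> cspan S"
    by (rule cspan_add[OF cspan_smult]) (use insert in auto)
  then show ?case using insert by simp
qed

lemma cspan_mono: "S \<subseteq> T \<Longrightarrow> cspan S \<subseteq> cspan T"
  unfolding cspan_def by blast

lemma cspan_coord:
  assumes "v \<in> cspan S" "\<forall>u\<in>S. u j = 0"
  shows "v j = 0"
proof -
  obtain F c where 1: "finite F" "F \<subseteq> S" "v = (\<lambda>j. \<Sum>u\<in>F. c u * u j)"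
    using assms unfolding cspan_def by blast
  thus ?thesis using assms(2) by (auto intro!: sum.neutral)
qed


lemma linalg:
  fixes n l :: nat and r :: "(nat \<Rightarrow> complex) \<Rightarrow> complex"
  assumes n2: "n \<ge> 2" and l2: "l \<ge> 2"
    and nd: "k_nondegenerate n r l (\<lambda>_. 0)"
    and h0: "\<And>m. m \<in> {1..n+1} \<Longrightarrow> dw r m (\<lambda>_. 0) = (if m = n+1 then \<i>/2 else 0)"
    and h1: "\<And>a m. a \<in> {1..n-1} \<Longrightarrow> m \<in> {1..n+1} \<Longrightarrow>
               Lam n r a (dw r m) (\<lambda>_. 0) = (if m = a then 1 else 0)"
  shows "\<exists>js. length js = l \<and> sorted js \<and> set js \<subseteq> {1..n} \<and> Delta n r js (\<lambda>_. 0) \<noteq> 0"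
proof -
  define Z :: "nat \<Rightarrow> complex" where "Z = (\<lambda>_. 0)"
  define u0 where "u0 = LrhoW n r [] Z"
  have u0: "\<And>m. u0 m = (if m = n+1 then \<i>/2 else 0)"
    using h0 unfolding u0_def LrhoW_def Z_def by auto
  have ua: "\<And>a m. a \<in> {1..n-1} \<Longrightarrow> LrhoW n r [a] Z m = (if m = a then 1 else 0)"
    using h1 unfolding LrhoW_def Z_def by auto
  define Gen where "Gen L = {LrhoW n r js Z | js. sorted js \<and> set js \<subseteq> {1..n} \<and> length js \<le> L}" for L
  have E: "Espace n r L Z = cspan (Gen L)" for L unfolding Espace_def Gen_def by simp
  have El: "Espace n r l Z = cslice n" and Ene: "Espace n r (l-1) Z \<noteq> Espace n r l Z"
    using nd unfolding k_nondegenerate_def Z_def by auto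
  define en :: "nat \<Rightarrow> complex" where "en = (\<lambda>j. if j = n then 1 else 0)"
  have "en \<in> cslice n" unfolding en_def cslice_def using n2 by auto
  hence "en \<in> cspan (Gen l)" using El E by auto
  moreover have "en n \<noteq> 0" unfolding en_def by simp
  ultimately obtain v where vG: "v \<in> Gen l" and vn: "v n \<noteq> 0" using cspan_coord by blast
  then obtain js where v: "v = LrhoW n r js Z" and js: "sorted js" "set js \<subseteq> {1..n}" "length js \<le> l"
    unfolding Gen_def by blast
  have v0: "\<And>j. j \<notin> {1..n+1} \<Longrightarrow> v j = 0" unfolding v LrhoW_def by auto
  have len: "length js = l"
  proof (rule ccontr)
    assume "length js \<noteq> l"
    hence "length js \<le> l - 1" using js by simp
    hence vG': "v \<in> Gen (l-1)" unfolding Gen_def v using js by blast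
    have u0G: "u0 \<in> Gen (l-1)" unfolding Gen_def u0_def by force
    have uaG: "LrhoW n r [a] Z \<in> Gen (l-1)" if "a \<in> {1..n-1}" for a
    proof -
      have "sorted [a] \<and> set [a] \<subseteq> {1..n} \<and> length [a] \<le> l - 1" using that l2 by auto
      thus ?thesis unfolding Gen_def by blast
    qed
    have "cslice n \<subseteq> Espace n r (l-1) Z"
    proof
      fix W assume W: "W \<in> cslice n"
      define t where "t = W n / v n"
      define w' where "w' = (\<lambda>j. W j - t * v j)"
      have eq: "W = (\<lambda>j. (t * v j + (\<Sum>i\<in>{1..n-1}. w' i * LrhoW n r [i] Z j)) + (w' (n+1) * (-2*\<i>)) * u0 j)"
      proof
        fix j
        have "(\<Sum>i\<in>{1..n-1}. w' i * LrhoW n r [i] Z j) = (\<Sum>i\<in>{1..n-1}. if i = j then w' i else 0)"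
          by (rule sum.cong) (auto simp: ua)
        also have "\<dots> = (if j \<in> {1..n-1} then w' j else 0)" by simp
        finally have s: "(\<Sum>i\<in>{1..n-1}. w' i * LrhoW n r [i] Z j) = (if j \<in> {1..n-1} then w' j else 0)" .
        have Wj: "j \<notin> {1..n+1} \<Longrightarrow> W j = 0" using W unfolding cslice_def by auto
        show "W j = (t * v j + (\<Sum>i\<in>{1..n-1}. w' i * LrhoW n r [i] Z j)) + (w' (n+1) * (-2*\<i>)) * u0 j"
        proof (cases "j \<in> {1..n-1}")
          case True then show ?thesis unfolding s u0 using n2 by (auto simp: w'_def)
        next
          case False
          show ?thesis
          proof (cases "j = n")
            case True then show ?thesis unfolding s u0 using vn n2 by (auto simp: t_def)
          next
            case False
            show ?thesis
            proof (cases "j = n+1")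
              case True then show ?thesis unfolding s u0 using n2 by (auto simp: w'_def algebra_simps)
            next
              case False
              hence "j \<notin> {1..n+1}" using \<open>j \<noteq> n\<close> \<open>j \<notin> {1..n-1}\<close> by auto
              then show ?thesis using False \<open>j \<notin> {1..n-1}\<close> Wj v0 unfolding s u0 by auto
            qed
          qed
        qed
      qed
      have "(\<lambda>j. (t * v j + (\<Sum>i\<in>{1..n-1}. w' i * LrhoW n r [i] Z j)) + (w' (n+1) * (-2*\<i>)) * u0 j)
             \<in> cspan (Gen (l-1))"
        by (intro cspan_add cspan_smult cspan_sum cspan_base vG' u0G uaG) auto
      thus "W \<in> Espace n r (l-1) Z" using eq E by simp
    qed
    moreover have "Espace n r (l-1) Z \<subseteq> Espace n r l Z"
      unfolding E by (rule cspan_mono) (auto simp: Gen_def)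
    ultimately show False using El Ene by auto
  qed
  have "Delta n r js Z \<noteq> 0"
  proof
    assume D0: "Delta n r js Z = 0"
    define M :: "complex mat" where "M = mat (n+1) (n+1) (\<lambda>(a, b). if a = 0 then LrhoW n r [] Z (b+1)
        else if a < n then LrhoW n r [a] Z (b+1) else LrhoW n r js Z (b+1))"
    have "det M = 0" using D0 unfolding Delta_def M_def .
    moreover have "M \<in> carrier_mat (n+1) (n+1)" unfolding M_def by simp
    ultimately obtain x where x: "x \<in> carrier_vec (n+1)" "x \<noteq> 0\<^sub>v (n+1)" "M *\<^sub>v x = 0\<^sub>v (n+1)"
      using det_0_iff_vec_prod_zero by blast
    have Mij: "M $$ (a,b) = (if a = 0 then u0 (b+1) else if a < n then LrhoW n r [a] Z (b+1) else v (b+1))"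
      if "a < n+1" "b < n+1" for a b using that unfolding M_def u0_def v by simp
    have row: "(\<Sum>b\<in>{0..<n+1}. M $$ (a,b) * x $ b) = 0" if "a < n+1" for a
    proof -
      have "(M *\<^sub>v x) $ a = 0" using x(3) that by simp
      moreover have "(M *\<^sub>v x) $ a = (\<Sum>b\<in>{0..<n+1}. M $$ (a,b) * x $ b)"
        using that x(1) unfolding M_def by (auto simp: scalar_prod_def)
      ultimately show ?thesis by simp
    qed
    have xn: "x $ n = 0"
    proof -
      have "(\<Sum>b\<in>{0..<n+1}. M $$ (0,b) * x $ b) = (\<Sum>b\<in>{0..<n+1}. if b = n then \<i>/2 * x $ b else 0)"
        by (rule sum.cong) (auto simp: Mij u0)
      also have "\<dots> = \<i>/2 * x $ n" by simp
      finally have e: "(\<Sum>b\<in>{0..<n+1}. M $$ (0,b) * x $ b) = \<i>/2 * x $ n" .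
      have r0: "(\<Sum>b\<in>{0..<n+1}. M $$ (0,b) * x $ b) = 0" by (rule row) simp
      have "\<i>/2 * x $ n = 0" using e r0 by (metis)
      thus ?thesis by simp
    qed
    have xb: "x $ b = 0" if "b < n - 1" for b
    proof -
      have a: "b+1 \<in> {1..n-1}" using that by auto
      have "(\<Sum>c\<in>{0..<n+1}. M $$ (b+1,c) * x $ c) = (\<Sum>c\<in>{0..<n+1}. if c = b then x $ c else 0)"
        by (rule sum.cong) (use that a in \<open>auto simp: Mij ua\<close>)
      also have "\<dots> = x $ b" using that by auto
      finally have e: "(\<Sum>c\<in>{0..<n+1}. M $$ (b+1,c) * x $ c) = x $ b" .
      have r0: "(\<Sum>c\<in>{0..<n+1}. M $$ (b+1,c) * x $ c) = 0" by (rule row) (use that in simp)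
      show ?thesis using e r0 by (metis)
    qed
    have xn1: "x $ (n-1) = 0"
    proof -
      have "(\<Sum>c\<in>{0..<n+1}. M $$ (n,c) * x $ c) = (\<Sum>c\<in>{0..<n+1}. if c = n - 1 then v n * x $ c else 0)"
      proof (rule sum.cong)
        fix c assume c: "c \<in> {0..<n+1}"
        show "M $$ (n,c) * x $ c = (if c = n - 1 then v n * x $ c else 0)"
        proof (cases "c = n - 1")
          case True then show ?thesis using n2 by (simp add: Mij)
        next
          case False
          hence "c < n - 1 \<or> c = n" using c by auto
          then show ?thesis using xb xn False by auto
        qed
      qed simp
      also have "\<dots> = v n * x $ (n-1)" using n2 by simp
      finally have e: "(\<Sum>c\<in>{0..<n+1}. M $$ (n,c) * x $ c) = v n * x $ (n-1)" .
      have r0: "(\<Sum>c\<in>{0..<n+1}. M $$ (n,c) * x $ c) = 0" by (rule row) simp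
      have "v n * x $ (n-1) = 0" using e r0 by (metis)
      thus ?thesis using vn by simp
    qed
    have "x = 0\<^sub>v (n+1)"
    proof (rule eq_vecI)
      fix b assume "b < dim_vec (0\<^sub>v (n+1) :: complex vec)"
      hence "b < n+1" by simp
      hence "b < n - 1 \<or> b = n - 1 \<or> b = n" by auto
      thus "x $ b = 0\<^sub>v (n+1) $ b" using xb xn xn1 \<open>b < n+1\<close> by auto
    qed (use x in simp)
    thus False using x by simp
  qed
  hence "Delta n r js (\<lambda>_. 0) \<noteq> 0" by (simp add: Z_def)
  thus ?thesis using len js by blast
qed


lemma line_same: "line d (line d W s) t = line d W (s + t)"
  by (auto simp: line_def fun_eq_iff algebra_simps)

lemma line_comm: "line d (line d' W s) t = line d' (line d W t) s"
  by (auto simp: line_def fun_eq_iff algebra_simps)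

lemma line_zero: "line d W 0 = W"
  by (auto simp: line_def fun_eq_iff)

lemma line_cslice: "d \<in> dirs n \<Longrightarrow> W \<in> cslice n \<Longrightarrow> line d W t \<in> cslice n"
  by (auto simp: line_def cslice_def dirs_def)

lemma cnorm_nonneg: "cnorm n W \<ge> 0"
  unfolding cnorm_def by (intro real_sqrt_ge_zero sum_nonneg) auto

lemma cnorm_line:
  assumes "d \<in> dirs n"
  shows "cnorm n (line d W t) \<le> cnorm n W + \<bar>t\<bar>"
proof -
  let ?e = "\<lambda>j. if j = fst d then \<bar>t\<bar> else 0"
  have L: "cnorm n V = L2_set (\<lambda>j. cmod (V j)) {1..n+1}" for V
    by (simp add: cnorm_def L2_set_def)
  have "cnorm n (line d W t) \<le> L2_set (\<lambda>j. cmod (W j) + ?e j) {1..n+1}"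
    unfolding L
  proof (rule L2_set_mono)
    fix j
    show "cmod (line d W t j) \<le> cmod (W j) + ?e j"
      by (auto simp: line_def norm_mult intro: order_trans[OF norm_triangle_ineq])
  qed simp
  also have "\<dots> \<le> L2_set (\<lambda>j. cmod (W j)) {1..n+1} + L2_set ?e {1..n+1}"
    by (rule L2_set_triangle_ineq)
  also have "L2_set ?e {1..n+1} = \<bar>t\<bar>"
  proof -
    have "(\<Sum>j\<in>{1..n+1}. (?e j)\<^sup>2) = (\<Sum>j\<in>{1..n+1}. if j = fst d then t\<^sup>2 else 0)"
      by (rule sum.cong) auto
    also have "\<dots> = t\<^sup>2" using assms by (auto simp: dirs_def)
    finally show ?thesis by (simp add: L2_set_def)
  qed
  finally show ?thesis unfolding L .
qed

lemma quad_vd: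
  fixes h :: "real \<Rightarrow> complex"
  assumes e: "e > 0" and b: "\<And>t. \<bar>t\<bar> < e \<Longrightarrow> cmod (h t - h 0 - of_real t * D) \<le> K * t^2"
  shows "vector_derivative h (at 0) = D"
proof -
  have "(h has_derivative (\<lambda>t. t *\<^sub>R D)) (at 0)"
    unfolding has_derivative_iff_norm
  proof
    show "bounded_linear (\<lambda>t. t *\<^sub>R D)" by (rule bounded_linear_scaleR_left)
    show "((\<lambda>y. norm (h y - h 0 - (y - 0) *\<^sub>R D) / norm (y - 0)) \<longlongrightarrow> 0) (at 0)"
    proof (rule Lim_null_comparison)
      show "\<forall>\<^sub>F y in at 0. norm (norm (h y - h 0 - (y - 0) *\<^sub>R D) / norm (y - 0)) \<le> \<bar>K\<bar> * \<bar>y\<bar>"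
        unfolding eventually_at
      proof (intro exI[of _ e] conjI ballI impI)
        fix y :: real assume "y \<in> UNIV" and y: "y \<noteq> 0 \<and> dist y 0 < e"
        hence "\<bar>y\<bar> < e" by simp
        have "norm (norm (h y - h 0 - (y - 0) *\<^sub>R D) / norm (y - 0)) = cmod (h y - h 0 - of_real y * D) / \<bar>y\<bar>"
          by (simp add: scaleR_conv_of_real)
        also have "\<dots> \<le> (\<bar>K\<bar> * \<bar>y\<bar> * \<bar>y\<bar>) / \<bar>y\<bar>"
        proof (rule divide_right_mono)
          have "K * y^2 \<le> \<bar>K\<bar> * (\<bar>y\<bar> * \<bar>y\<bar>)" by (simp add: power2_eq_square mult_right_mono)
          thus "cmod (h y - h 0 - of_real y * D) \<le> \<bar>K\<bar> * \<bar>y\<bar> * \<bar>y\<bar>"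
            using b[OF \<open>\<bar>y\<bar> < e\<close>] by (simp add: mult.assoc)
        qed simp
        also have "\<dots> = \<bar>K\<bar> * \<bar>y\<bar>" using y by simp
        finally show "norm (norm (h y - h 0 - (y - 0) *\<^sub>R D) / norm (y - 0)) \<le> \<bar>K\<bar> * \<bar>y\<bar>" .
      qed (use e in auto)
      have "((\<lambda>y::real. \<bar>K\<bar> * \<bar>y\<bar>) \<longlongrightarrow> \<bar>K\<bar> * \<bar>0\<bar>) (at 0)" by (intro tendsto_intros)
      thus "((\<lambda>y::real. \<bar>K\<bar> * \<bar>y\<bar>) \<longlongrightarrow> 0) (at 0)" by simp
    qed
  qed
  hence "(h has_vector_derivative D) (at 0)" by (simp add: has_vector_derivative_def)
  thus ?thesis by (rule vector_derivative_at)
qed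

lemma deriv_Re:
  fixes f :: "real \<Rightarrow> complex"
  assumes "f differentiable (at x)"
  shows "((\<lambda>t. Re (f t)) has_real_derivative Re (vector_derivative f (at x))) (at x)"
proof -
  have "(f has_derivative (\<lambda>t. t *\<^sub>R vector_derivative f (at x))) (at x)"
    using assms vector_derivative_works has_vector_derivative_def by blast
  from bounded_linear.has_derivative[OF bounded_linear_Re this]
  have "((\<lambda>t. Re (f t)) has_derivative (\<lambda>t. Re (t *\<^sub>R vector_derivative f (at x)))) (at x)" .
  moreover have "(\<lambda>t. Re (t *\<^sub>R vector_derivative f (at x))) = (*) (Re (vector_derivative f (at x)))"
    by (auto simp: fun_eq_iff)
  ultimately show ?thesis unfolding has_field_derivative_def by simp
qed

lemma deriv_Im:
  fixes f :: "real \<Rightarrow> complex"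
  assumes "f differentiable (at x)"
  shows "((\<lambda>t. Im (f t)) has_real_derivative Im (vector_derivative f (at x))) (at x)"
proof -
  have "(f has_derivative (\<lambda>t. t *\<^sub>R vector_derivative f (at x))) (at x)"
    using assms vector_derivative_works has_vector_derivative_def by blast
  from bounded_linear.has_derivative[OF bounded_linear_Im this]
  have "((\<lambda>t. Im (f t)) has_derivative (\<lambda>t. Im (t *\<^sub>R vector_derivative f (at x)))) (at x)" .
  moreover have "(\<lambda>t. Im (t *\<^sub>R vector_derivative f (at x))) = (*) (Im (vector_derivative f (at x)))"
    by (auto simp: fun_eq_iff)
  ultimately show ?thesis unfolding has_field_derivative_def by simp
qed

lemma vd_Im0:
  fixes f :: "real \<Rightarrow> complex"
  assumes "f differentiable (at 0)" "e > 0" "\<And>t. \<bar>t\<bar> < e \<Longrightarrow> Im (f t) = 0"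
  shows "Im (vector_derivative f (at 0)) = 0"
proof -
  have "((\<lambda>t. Im (f t)) has_real_derivative Im (vector_derivative f (at 0))) (at 0)"
    by (rule deriv_Im[OF assms(1)])
  hence "((\<lambda>t. 0) has_real_derivative Im (vector_derivative f (at 0))) (at 0)"
    by (rule has_field_derivative_transform_within[where d=e]) (use assms in auto)
  moreover have "((\<lambda>t. 0) has_real_derivative 0) (at (0::real))" by simp
  ultimately show ?thesis using DERIV_unique by blast
qed


lemma tri_aux:
  assumes "\<bar>(b::real) - q\<bar> < \<bar>a - q\<bar>/2" "\<bar>b - a\<bar> < \<bar>a - q\<bar>/2" shows False
proof -
  have "\<bar>a - q\<bar> \<le> \<bar>a - b\<bar> + \<bar>b - q\<bar>" using abs_triangle_ineq[of "a - b" "b - q"] by simp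
  moreover have "\<bar>a - b\<bar> = \<bar>b - a\<bar>" by (rule abs_minus_commute)
  ultimately have "\<bar>a - q\<bar> \<le> \<bar>b - a\<bar> + \<bar>b - q\<bar>" by simp
  moreover have "\<And>x y z::real. x \<le> y + z \<Longrightarrow> z < x/2 \<Longrightarrow> y < x/2 \<Longrightarrow> False" by linarith
  ultimately show False using assms by blast
qed

theorem lemma5p1:
  fixes n l :: nat and \<rho> \<phi> :: "(nat \<Rightarrow> complex) \<Rightarrow> real"
  assumes "n \<ge> 2"
    and smooth: "smooth_near0 n (\<lambda>W. complex_of_real (\<rho> W))"
    and form: "\<exists>\<delta>>0. \<forall>W\<in>cslice n. cnorm n W < \<delta> \<longrightarrow>
       \<rho> W = - Im (W (n+1)) + (\<Sum>j=1..n-1. (cmod (W j))^2) + \<phi> W"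
    and cubic: "\<exists>C \<delta>. \<delta> > 0 \<and> (\<forall>W\<in>cslice n. cnorm n W < \<delta> \<longrightarrow> \<bar>\<phi> W\<bar> \<le> C * cnorm n W ^ 3)"
    and "l \<ge> 2"
    and nondeg: "k_nondegenerate n (\<lambda>W. complex_of_real (\<rho> W)) l (\<lambda>_. 0)"
  shows "\<exists>is. length is = l \<and> sorted is \<and> set is \<subseteq> {1..n} \<and>
           Delta n (\<lambda>W. complex_of_real (\<rho> W)) is (\<lambda>_. 0) \<noteq> 0"
proof -
  note n2 = \<open>n \<ge> 2\<close>
  define R where "R = (\<lambda>W. complex_of_real (\<rho> W))"
  define Z :: "nat \<Rightarrow> complex" where "Z = (\<lambda>_. 0)"
  define q where "q = (\<lambda>W::nat\<Rightarrow>complex. - Im (W (n+1)) + (\<Sum>j=1..n-1. (cmod (W j))^2))"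
  define \<theta> where "\<theta> = (\<lambda>j (w::complex). (if j = n+1 then - Im w else 0) + (if j \<in> {1..n-1} then cmod w ^ 2 else 0))"
  obtain \<delta>0 where \<delta>0: "\<delta>0 > 0" and sm: "\<And>ds W. set ds \<subseteq> dirs n \<Longrightarrow> W \<in> cslice n \<Longrightarrow> cnorm n W < \<delta>0 \<Longrightarrow>
       (\<forall>d\<in>dirs n. (\<lambda>t. pdirs ds R (line d W t)) differentiable (at 0)) \<and> cont_slice n (pdirs ds R) W"
    using smooth unfolding smooth_near0_def R_def by blast
  obtain \<delta>1 where \<delta>1: "\<delta>1 > 0" and fm: "\<And>W. W \<in> cslice n \<Longrightarrow> cnorm n W < \<delta>1 \<Longrightarrow> \<rho> W = q W + \<phi> W"
    using form unfolding q_def by blast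
  obtain C \<delta>2 where \<delta>2: "\<delta>2 > 0" and cb: "\<And>W. W \<in> cslice n \<Longrightarrow> cnorm n W < \<delta>2 \<Longrightarrow> \<bar>\<phi> W\<bar> \<le> C * cnorm n W ^ 3"
    using cubic by blast
  define \<delta> where "\<delta> = min \<delta>0 (min \<delta>1 \<delta>2)"
  have \<delta>: "\<delta> > 0" "\<delta> \<le> \<delta>0" "\<delta> \<le> \<delta>1" "\<delta> \<le> \<delta>2" using \<delta>0 \<delta>1 \<delta>2 by (auto simp: \<delta>_def)
  define K where "K = \<bar>C\<bar>"
  have K: "K \<ge> 0" by (simp add: K_def)
  have rq: "\<And>W. W \<in> cslice n \<Longrightarrow> cnorm n W < \<delta> \<Longrightarrow> \<rho> W = q W + \<phi> W"
    using fm \<delta> by simp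
  have pb: "\<And>W. W \<in> cslice n \<Longrightarrow> cnorm n W < \<delta> \<Longrightarrow> \<bar>\<phi> W\<bar> \<le> K * cnorm n W ^ 3"
  proof -
    fix W assume W: "W \<in> cslice n" "cnorm n W < \<delta>"
    have "\<bar>\<phi> W\<bar> \<le> C * cnorm n W ^ 3" using cb W \<delta> by simp
    also have "\<dots> \<le> K * cnorm n W ^ 3" unfolding K_def
      by (rule mult_right_mono) (auto simp: cnorm_nonneg)
    finally show "\<bar>\<phi> W\<bar> \<le> K * cnorm n W ^ 3" .
  qed
  have Zs: "Z \<in> cslice n" by (simp add: Z_def cslice_def)
  have cZ: "cnorm n Z = 0" by (simp add: Z_def cnorm_def)
  have phiZ: "\<phi> Z = 0" using pb[OF Zs] cZ \<delta> by simp
  have qZ: "q Z = 0" by (simp add: q_def Z_def)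
  have RZ: "R Z = 0" using rq[OF Zs] cZ \<delta> phiZ qZ by (simp add: R_def)
  have diff0: "\<And>W d. W \<in> cslice n \<Longrightarrow> cnorm n W < \<delta> \<Longrightarrow> d \<in> dirs n \<Longrightarrow> (\<lambda>t. R (line d W t)) differentiable (at 0)"
    using sm[of "[]"] \<delta> by fastforce
  have diff1: "\<And>W a d. W \<in> cslice n \<Longrightarrow> cnorm n W < \<delta> \<Longrightarrow> a \<in> dirs n \<Longrightarrow> d \<in> dirs n \<Longrightarrow>
        (\<lambda>t. pdir a R (line d W t)) differentiable (at 0)"
  proof -
    fix W a d assume "W \<in> cslice n" "cnorm n W < \<delta>" "a \<in> dirs n" "d \<in> dirs n"
    thus "(\<lambda>t. pdir a R (line d W t)) differentiable (at 0)" using sm[of "[a]" W] \<delta> by auto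
  qed
  have cont2: "\<And>a b. a \<in> dirs n \<Longrightarrow> b \<in> dirs n \<Longrightarrow> cont_slice n (pdir b (pdir a R)) Z"
  proof -
    fix a b assume "a \<in> dirs n" "b \<in> dirs n"
    thus "cont_slice n (pdir b (pdir a R)) Z" using sm[of "[b,a]" Z] Zs cZ \<delta> by auto
  qed
  have real1: "\<And>W a. W \<in> cslice n \<Longrightarrow> cnorm n W < \<delta> \<Longrightarrow> a \<in> dirs n \<Longrightarrow> Im (pdir a R W) = 0"
  proof -
    fix W a assume h: "W \<in> cslice n" "cnorm n W < \<delta>" "a \<in> dirs n"
    show "Im (pdir a R W) = 0"
      unfolding pdir_def by (rule vd_Im0[where e=1, OF diff0[OF h]]) (auto simp: R_def)
  qed
  have dR1: "\<And>W a. W \<in> cslice n \<Longrightarrow> cnorm n W < \<delta> \<Longrightarrow> a \<in> dirs n \<Longrightarrow>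
       ((\<lambda>t. \<rho> (line a W t)) has_real_derivative Re (pdir a R W)) (at 0)"
    using deriv_Re[OF diff0] unfolding pdir_def by (simp add: R_def)
  have dR2: "\<And>W a b. W \<in> cslice n \<Longrightarrow> cnorm n W < \<delta> \<Longrightarrow> a \<in> dirs n \<Longrightarrow> b \<in> dirs n \<Longrightarrow>
       ((\<lambda>t. Re (pdir a R (line b W t))) has_real_derivative Re (pdir b (pdir a R) W)) (at 0)"
  proof -
    fix W a b assume h: "W \<in> cslice n" "cnorm n W < \<delta>" "a \<in> dirs n" "b \<in> dirs n"
    show "((\<lambda>t. Re (pdir a R (line b W t))) has_real_derivative Re (pdir b (pdir a R) W)) (at 0)"
      using deriv_Re[OF diff1[OF h]] unfolding pdir_def[of b "pdir a R"] .
  qed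
  have q_sum: "q W = (\<Sum>j\<in>{1..n+1}. \<theta> j (W j))" for W
  proof -
    have 1: "(\<Sum>j\<in>{1..n+1}. if j = n+1 then - Im (W j) else 0) = - Im (W (n+1))" by simp
    have 2: "(\<Sum>j\<in>{1..n+1}. if j \<in> {1..n-1} then cmod (W j) ^ 2 else 0) = (\<Sum>j=1..n-1. (cmod (W j))^2)"
    proof -
      have "{1..n+1} \<inter> {1..n-1} = {1..n-1}" by auto
      thus ?thesis using sum.inter_restrict[of "{1..n+1}" "\<lambda>j. cmod (W j)^2" "{1..n-1}"] by simp
    qed
    show ?thesis unfolding q_def \<theta>_def sum.distrib 1 2 ..
  qed
  have th0: "\<theta> j 0 = 0" for j by (simp add: \<theta>_def)
  have qupd: "q (Z(j := w)) = \<theta> j w" for j w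
  proof -
    have "q (Z(j := w)) = (\<Sum>i\<in>{1..n+1}. if i = j then \<theta> j w else 0)"
      unfolding q_sum by (rule sum.cong) (auto simp: Z_def th0)
    also have "\<dots> = \<theta> j w" by (auto simp: \<theta>_def)
    finally show ?thesis .
  qed
  have qupd2: "q (Z(j := w, j' := w')) = \<theta> j w + \<theta> j' w'" if "j \<noteq> j'" for j j' w w'
  proof -
    have "q (Z(j := w, j' := w')) = (\<Sum>i\<in>{1..n+1}. (if i = j then \<theta> j w else 0) + (if i = j' then \<theta> j' w' else 0))"
      unfolding q_sum by (rule sum.cong) (use that in \<open>auto simp: Z_def th0\<close>)
    also have "\<dots> = \<theta> j w + \<theta> j' w'" unfolding sum.distrib by (auto simp: \<theta>_def)
    finally show ?thesis .
  qed
  have lineZ: "line d Z t = Z(fst d := (if snd d then \<i> else 1) * of_real t)" for d t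
    by (auto simp: line_def Z_def fun_eq_iff)
  have cline: "cnorm n (line d Z t) \<le> \<bar>t\<bar>" if "d \<in> dirs n" for d t
    using cnorm_line[OF that, of Z t] cZ by simp
  have pd1: "pdir (j, s) R Z = (if j = n+1 \<and> s then -1 else 0)" if d: "(j,s) \<in> dirs n" for j s
    unfolding pdir_def
  proof (rule quad_vd[where e="min \<delta> 1" and K="1 + K"])
    fix t :: real assume t: "\<bar>t\<bar> < min \<delta> 1"
    have L: "line (j,s) Z t \<in> cslice n" using line_cslice[OF d Zs] .
    have cL: "cnorm n (line (j,s) Z t) \<le> \<bar>t\<bar>" using cline[OF d] .
    hence cL': "cnorm n (line (j,s) Z t) < \<delta>" using t by simp
    have eq: "\<rho> (line (j,s) Z t) = q (line (j,s) Z t) + \<phi> (line (j,s) Z t)" by (rule rq[OF L cL'])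
    have qL: "q (line (j,s) Z t) = (if j = n+1 then (if s then -t else 0) else 0) + (if j \<in> {1..n-1} then t^2 else 0)"
      unfolding lineZ qupd by (auto simp: \<theta>_def norm_mult)
    have "\<bar>\<phi> (line (j,s) Z t)\<bar> \<le> K * cnorm n (line (j,s) Z t) ^ 3" by (rule pb[OF L cL'])
    also have "\<dots> \<le> K * \<bar>t\<bar> ^ 3"
      by (intro mult_left_mono power_mono cL cnorm_nonneg K)
    also have "\<dots> \<le> K * t^2"
    proof (rule mult_left_mono[OF _ K])
      have "\<bar>t\<bar> ^ 3 = \<bar>t\<bar> * t^2" by (simp add: power3_eq_cube power2_eq_square)
      also have "\<dots> \<le> 1 * t^2" using t by (intro mult_right_mono) auto
      finally show "\<bar>t\<bar> ^ 3 \<le> t^2" by simp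
    qed
    finally have pL: "\<bar>\<phi> (line (j,s) Z t)\<bar> \<le> K * t^2" .
    have "R (line (j,s) Z t) - R Z - of_real t * (if j = n+1 \<and> s then -1 else 0)
          = of_real ((if j \<in> {1..n-1} then t^2 else 0) + \<phi> (line (j,s) Z t))"
      unfolding RZ by (simp add: R_def eq qL)
    hence "cmod (R (line (j,s) Z t) - R Z - of_real t * (if j = n+1 \<and> s then -1 else 0))
          = \<bar>(if j \<in> {1..n-1} then t^2 else 0) + \<phi> (line (j,s) Z t)\<bar>" by (simp only: norm_of_real)
    also have "\<dots> \<le> t^2 + K * t^2" proof -
      have t2: "0 \<le> t^2" by simp
      show ?thesis using pL t2 by (smt (verit))
    qed
    finally have X: "cmod (R (line (j,s) Z t) - R Z - of_real t * (if j = n+1 \<and> s then -1 else 0)) \<le> (1 + K) * t^2"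
      by (simp add: algebra_simps)
    show "cmod (R (line (j,s) Z t) - R (line (j,s) Z 0) - of_real t * (if j = n+1 \<and> s then -1 else 0)) \<le> (1 + K) * t^2"
      using X by (simp only: line_zero)
  qed (use \<delta> in simp)
  have pd2: "pdir b (pdir a R) Z = of_real (if a = b \<and> fst a \<in> {1..n-1} then 2 else 0)"
    if a: "a \<in> dirs n" and b: "b \<in> dirs n" for a b
  proof -
    define Q :: real where "Q = (if a = b \<and> fst a \<in> {1..n-1} then 2 else 0)"
    define P where "P x y = line a (line b Z y) x" for x y
    define D2 where "D2 = pdir b (pdir a R)"
    have Ps: "P x y \<in> cslice n" for x y unfolding P_def by (intro line_cslice a b Zs)
    have Pn: "cnorm n (P x y) \<le> \<bar>x\<bar> + \<bar>y\<bar>" for x y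
      using cnorm_line[OF a, of "line b Z y" x] cline[OF b, of y] unfolding P_def by simp
    have Pa: "line a (P x y) t = P (t + x) y" for x y t unfolding P_def by (simp add: line_same add.commute)
    have Pb: "line b (P x y) t = P x (t + y)" for x y t
      unfolding P_def by (simp add: line_comm[of b a] line_same add.commute)
    have P00: "P 0 0 = Z" unfolding P_def by (simp add: line_zero)
    have Dq: "q (P s s) - q (P 0 s) - q (P s 0) + q (P 0 0) = Q * s^2" for s
    proof -
      obtain ja sa where ja: "a = (ja, sa)" by (cases a)
      obtain jb sb where jb: "b = (jb, sb)" by (cases b)
      define ca :: complex where "ca = (if sa then \<i> else 1)"
      define cb :: complex where "cb = (if sb then \<i> else 1)"
      show ?thesis
      proof (cases "ja = jb")
        case True
        have PP: "P x y = Z(ja := cb * of_real y + ca * of_real x)" for x y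
          unfolding P_def ja jb True by (auto simp: line_def Z_def fun_eq_iff ca_def cb_def)
        show ?thesis unfolding PP qupd
          by (cases sa; cases sb) (auto simp: \<theta>_def Q_def ja jb True ca_def cb_def cmod_power2 algebra_simps)
      next
        case False
        have PP: "P x y = Z(jb := cb * of_real y, ja := ca * of_real x)" for x y
          unfolding P_def ja jb using False by (auto simp: line_def Z_def fun_eq_iff ca_def cb_def)
        show ?thesis unfolding PP qupd2[OF False[symmetric]]
          using False by (auto simp: \<theta>_def Q_def ja jb)
      qed
    qed
    have ImD: "Im (D2 Z) = 0"
      unfolding D2_def pdir_def[of b "pdir a R"]
    proof (rule vd_Im0[where e=\<delta>])
      show "(\<lambda>t. pdir a R (line b Z t)) differentiable (at 0)" by (rule diff1[OF Zs _ a b]) (simp add: cZ \<delta>)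
      fix t :: real assume "\<bar>t\<bar> < \<delta>"
      thus "Im (pdir a R (line b Z t)) = 0"
        using real1[OF line_cslice[OF b Zs] _ a] cline[OF b, of t] by simp
    qed (use \<delta> in simp)
    have DG: "DERIV (\<lambda>x'. \<rho> (P x' y)) x :> Re (pdir a R (P x y))" if "\<bar>x\<bar> + \<bar>y\<bar> < \<delta>" for x y
    proof -
      have "((\<lambda>t. \<rho> (line a (P x y) t)) has_real_derivative Re (pdir a R (P x y))) (at 0)"
        by (rule dR1[OF Ps _ a]) (use Pn[of x y] that in simp)
      hence "((\<lambda>t. \<rho> (P (t + x) y)) has_real_derivative Re (pdir a R (P x y))) (at 0)" by (simp only: Pa)
      thus ?thesis using DERIV_shift[of "\<lambda>x'. \<rho> (P x' y)" _ 0 x] by simp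
    qed
    have DH: "DERIV (\<lambda>y'. Re (pdir a R (P x y'))) y :> Re (D2 (P x y))" if "\<bar>x\<bar> + \<bar>y\<bar> < \<delta>" for x y
    proof -
      have "((\<lambda>t. Re (pdir a R (line b (P x y) t))) has_real_derivative Re (D2 (P x y))) (at 0)"
        unfolding D2_def by (rule dR2[OF Ps _ a b]) (use Pn[of x y] that in simp)
      hence "((\<lambda>t. Re (pdir a R (P x (t + y)))) has_real_derivative Re (D2 (P x y))) (at 0)" by (simp only: Pb)
      thus ?thesis using DERIV_shift[of "\<lambda>y'. Re (pdir a R (P x y'))" _ 0 y] by simp
    qed
    have ReD: "Re (D2 Z) = Q"
    proof (rule ccontr)
      assume ne: "Re (D2 Z) \<noteq> Q"
      define g where "g = \<bar>Re (D2 Z) - Q\<bar>"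
      have g: "g > 0" using ne by (simp add: g_def)
      obtain \<eta> where \<eta>: "\<eta> > 0" and ct: "\<And>V. V \<in> cslice n \<Longrightarrow> cnorm n V < \<eta> \<Longrightarrow> cmod (D2 V - D2 Z) < g/2"
      proof -
        have "\<exists>\<eta>>0. \<forall>V\<in>cslice n. cnorm n (\<lambda>j. V j - Z j) < \<eta> \<longrightarrow> cmod (D2 V - D2 Z) < g/2"
        proof -
          have "cont_slice n D2 Z" using cont2[OF a b] unfolding D2_def .
          moreover have "g/2 > 0" using g by simp
          ultimately show ?thesis unfolding cont_slice_def by blast
        qed
        moreover have "(\<lambda>j. V j - Z j) = V" for V by (simp add: Z_def)
        ultimately show ?thesis using that by auto
      qed
      define s where "s = min (\<delta>/4) (min (\<eta>/4) (g / (40 * (K+1))))"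
      have s: "s > 0" "2 * s < \<delta>" "2 * s < \<eta>" using \<delta> \<eta> g K by (auto simp: s_def)
      have sK: "10 * K * s < g/2"
      proof -
        have "s \<le> g / (40 * (K+1))" by (simp add: s_def)
        hence "10 * K * s \<le> 10 * K * (g / (40 * (K+1)))" by (rule mult_left_mono) (use K in auto)
        also have "\<dots> = g/4 * (K / (K+1))" using K by (simp add: field_simps)
        also have "\<dots> \<le> g/4 * 1" using K g by (intro mult_left_mono) auto
        finally show ?thesis using g by simp
      qed
      define G where "G x = \<rho> (P x s) - \<rho> (P x 0)" for x
      obtain \<xi> where \<xi>: "0 < \<xi>" "\<xi> < s" and e1: "G s - G 0 = (s - 0) * (Re (pdir a R (P \<xi> s)) - Re (pdir a R (P \<xi> 0)))"
      proof -
        have "\<exists>z. 0 < z \<and> z < s \<and> G s - G 0 = (s - 0) * (Re (pdir a R (P z s)) - Re (pdir a R (P z 0)))"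
        proof (rule MVT2)
          show "0 < s" by (rule s(1))
          fix x assume x: "0 \<le> x" "x \<le> s"
          show "DERIV G x :> Re (pdir a R (P x s)) - Re (pdir a R (P x 0))"
            unfolding G_def by (intro DERIV_diff DG) (use x s in auto)
        qed
        thus ?thesis using that by blast
      qed
      obtain \<eta>' where \<eta>': "0 < \<eta>'" "\<eta>' < s" and e2: "Re (pdir a R (P \<xi> s)) - Re (pdir a R (P \<xi> 0)) = (s - 0) * Re (D2 (P \<xi> \<eta>'))"
      proof -
        have "\<exists>z. 0 < z \<and> z < s \<and> Re (pdir a R (P \<xi> s)) - Re (pdir a R (P \<xi> 0)) = (s - 0) * Re (D2 (P \<xi> z))"
        proof (rule MVT2)
          show "0 < s" by (rule s(1))
          fix y assume y: "0 \<le> y" "y \<le> s"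
          show "DERIV (\<lambda>y'. Re (pdir a R (P \<xi> y'))) y :> Re (D2 (P \<xi> y))"
            by (rule DH) (use y s \<xi> in auto)
        qed
        thus ?thesis using that by blast
      qed
      have GG: "G s - G 0 = s^2 * Re (D2 (P \<xi> \<eta>'))" using e1 e2 by (simp add: power2_eq_square)
      have rP: "\<rho> (P x y) = q (P x y) + \<phi> (P x y)" if "0 \<le> x" "x \<le> s" "0 \<le> y" "y \<le> s" for x y
        by (rule rq[OF Ps]) (use Pn[of x y] that s in auto)
      have bP: "\<bar>\<phi> (P x y)\<bar> \<le> K * (x + y)^3" if "0 \<le> x" "x \<le> s" "0 \<le> y" "y \<le> s" for x y
      proof -
        have c: "cnorm n (P x y) \<le> x + y" using Pn[of x y] that by simp
        have "\<bar>\<phi> (P x y)\<bar> \<le> K * cnorm n (P x y) ^ 3" by (rule pb[OF Ps]) (use c that s in auto)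
        also have "\<dots> \<le> K * (x + y)^3" by (intro mult_left_mono power_mono c cnorm_nonneg K)
        finally show ?thesis .
      qed
      have "G s - G 0 = (q (P s s) - q (P 0 s) - q (P s 0) + q (P 0 0))
              + (\<phi> (P s s) - \<phi> (P 0 s) - \<phi> (P s 0) + \<phi> (P 0 0))"
        unfolding G_def using rP[of s s] rP[of 0 s] rP[of s 0] rP[of 0 0] s by simp
      hence GQ: "s^2 * Re (D2 (P \<xi> \<eta>')) - Q * s^2 = \<phi> (P s s) - \<phi> (P 0 s) - \<phi> (P s 0)"
        using GG Dq[of s] unfolding P00 phiZ by linarith
      have b1: "\<bar>\<phi> (P s s)\<bar> \<le> K * (8 * s^3)" using bP[of s s] s by (simp add: power3_eq_cube)
      have b2: "\<bar>\<phi> (P 0 s)\<bar> \<le> K * s^3" using bP[of 0 s] s by simp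
      have b3: "\<bar>\<phi> (P s 0)\<bar> \<le> K * s^3" using bP[of s 0] s by simp
      have "s^2 * \<bar>Re (D2 (P \<xi> \<eta>')) - Q\<bar> = \<bar>s^2 * Re (D2 (P \<xi> \<eta>')) - Q * s^2\<bar>"
      proof -
        have eqA: "s^2 * Re (D2 (P \<xi> \<eta>')) - Q * s^2 = s^2 * (Re (D2 (P \<xi> \<eta>')) - Q)"
          by (simp add: algebra_simps)
        show ?thesis unfolding eqA abs_mult by simp
      qed
      also have "\<dots> \<le> 10 * K * s^3" unfolding GQ using b1 b2 b3 by (simp add: algebra_simps abs_le_iff) 
      also have "\<dots> = s^2 * (10 * K * s)" by (simp add: power3_eq_cube power2_eq_square)
      finally have "\<bar>Re (D2 (P \<xi> \<eta>')) - Q\<bar> \<le> 10 * K * s" using s by simp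
      hence c1: "\<bar>Re (D2 (P \<xi> \<eta>')) - Q\<bar> < g/2" using sK by simp
      have "cmod (D2 (P \<xi> \<eta>') - D2 Z) < g/2"
        by (rule ct[OF Ps]) (use Pn[of \<xi> \<eta>'] \<xi> \<eta>' s in auto)
      hence c2: "\<bar>Re (D2 (P \<xi> \<eta>')) - Re (D2 Z)\<bar> < g/2"
        using abs_Re_le_cmod[of "D2 (P \<xi> \<eta>') - D2 Z"] by simp
      show False using tri_aux[OF c1[unfolded g_def] c2[unfolded g_def]] .
    qed
    show ?thesis unfolding D2_def[symmetric] Q_def[symmetric]
      by (rule complex_eqI) (simp_all add: ReD ImD)
  qed
  have hw: "dw R m Z = (if m = n+1 then \<i>/2 else 0)" if "m \<in> {1..n+1}" for m
  proof -
    have "(m, False) \<in> dirs n" "(m, True) \<in> dirs n" using that by (auto simp: dirs_def)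
    thus ?thesis unfolding dw_def by (simp add: pd1)
  qed
  have hwb: "dwb R m Z = (if m = n+1 then -\<i>/2 else 0)" if "m \<in> {1..n+1}" for m
  proof -
    have "(m, False) \<in> dirs n" "(m, True) \<in> dirs n" using that by (auto simp: dirs_def)
    thus ?thesis unfolding dwb_def by (simp add: pd1)
  qed
  have pdw: "pdir d (dw R m) Z = (pdir d (pdir (m,False) R) Z - \<i> * pdir d (pdir (m,True) R) Z) / 2"
    if d: "d \<in> dirs n" and m: "m \<in> {1..n+1}" for d m
  proof -
    have mF: "(m, False) \<in> dirs n" and mT: "(m, True) \<in> dirs n" using m by (auto simp: dirs_def)
    have 1: "((\<lambda>t. pdir (m,False) R (line d Z t)) has_vector_derivative pdir d (pdir (m,False) R) Z) (at 0)"
      using diff1[OF Zs _ mF d] cZ \<delta> vector_derivative_works unfolding pdir_def[of d "pdir (m,False) R"] by auto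
    have 2: "((\<lambda>t. pdir (m,True) R (line d Z t)) has_vector_derivative pdir d (pdir (m,True) R) Z) (at 0)"
      using diff1[OF Zs _ mT d] cZ \<delta> vector_derivative_works unfolding pdir_def[of d "pdir (m,True) R"] by auto
    have "((\<lambda>t. (pdir (m,False) R (line d Z t) - \<i> * pdir (m,True) R (line d Z t)) / 2) has_vector_derivative
           (pdir d (pdir (m,False) R) Z - \<i> * pdir d (pdir (m,True) R) Z) / 2) (at 0)"
      by (intro has_vector_derivative_divide has_vector_derivative_diff has_vector_derivative_mult_right 1 2)
    hence "vector_derivative (\<lambda>t. dw R m (line d Z t)) (at 0) = (pdir d (pdir (m,False) R) Z - \<i> * pdir d (pdir (m,True) R) Z) / 2"
      unfolding dw_def by (rule vector_derivative_at)
    thus ?thesis unfolding pdir_def[of d "dw R m"] .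
  qed
  have h1: "Lam n R a (dw R m) Z = (if m = a then 1 else 0)" if a: "a \<in> {1..n-1}" and m: "m \<in> {1..n+1}" for a m
  proof -
    have aF: "(a, False) \<in> dirs n" and aT: "(a, True) \<in> dirs n" and mF: "(m, False) \<in> dirs n" and mT: "(m, True) \<in> dirs n"
      using a m by (auto simp: dirs_def)
    have a1: "a \<in> {1..n+1}" "a \<noteq> n+1" using a by auto
    have "dwb (dw R m) a Z = (if m = a then 1 else 0)"
      unfolding dwb_def pdw[OF aF m] pdw[OF aT m] pd2[OF mF aF] pd2[OF mT aF] pd2[OF mF aT] pd2[OF mT aT]
      using a by auto
    moreover have "dwb R (n+1) Z = -\<i>/2" using hwb[of "n+1"] by simp
    moreover have "dwb R a Z = 0" using hwb[OF a1(1)] a1(2) by simp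
    ultimately show ?thesis unfolding Lam_def by simp
  qed
  have "\<exists>js. length js = l \<and> sorted js \<and> set js \<subseteq> {1..n} \<and> Delta n R js (\<lambda>_. 0) \<noteq> 0"
  proof (rule linalg[OF n2 \<open>l \<ge> 2\<close>])
    show "k_nondegenerate n R l (\<lambda>_. 0)" using nondeg unfolding R_def .
    show "\<And>m. m \<in> {1..n+1} \<Longrightarrow> dw R m (\<lambda>_. 0) = (if m = n+1 then \<i>/2 else 0)"
      using hw unfolding Z_def .
    show "\<And>a m. a \<in> {1..n-1} \<Longrightarrow> m \<in> {1..n+1} \<Longrightarrow> Lam n R a (dw R m) (\<lambda>_. 0) = (if m = a then 1 else 0)"
      using h1 unfolding Z_def .
  qed
  thus ?thesis unfolding R_def .
qed

end
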